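(* Let $a$ and $b$ be coprime integers and let $\ell\in G_{(a,b)}$ with $\ell\notin\{1,2\}$. Then all elements of $\mathcal{K}_{(a,b)}(\ell)$ have the same parity.
   Context: For integers $x,y$, $G_{(x,y)}$ is the set of positive integers $n$ such that $n\mid(x^k+y^k)$ for some positive integer $k$; for such $n$, $\mathcal{K}_{(x,y)}(n)=\{k\text{ positive integer}: n\mid(x^k+y^k)\}$. *)

theory Defs
  imports Main
begin

definition G :: "int \<Rightarrow> int \<Rightarrow> nat set" where
  "G x y = {n. n > 0 \<and> (\<exists>k::nat. k > 0 \<and> int n dvd (x ^ k + y ^ k))}"

definition K :: "int \<Rightarrow> int \<Rightarrow> nat \<Rightarrow> nat set" where
  "K x y n = {k. k > 0 \<and> int n dvd (x ^ k + y ^ k)}"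

end

theory Submission
  imports Defs "HOL-Number_Theory.Cong"
begin

lemma key:
  fixes a b :: int and l :: nat
  assumes cop: "coprime a b" and l0: "l > 0"
    and k1: "k1 > 0" "int l dvd a ^ k1 + b ^ k1" "odd k1"
    and k2: "k2 > 0" "int l dvd a ^ k2 + b ^ k2" "even k2"
  shows "l \<in> {1, 2}"
proof -
  have c1: "[a ^ k1 = - (b ^ k1)] (mod int l)"
    using k1(2) by (simp add: cong_iff_dvd_diff)
  have c2: "[a ^ k2 = - (b ^ k2)] (mod int l)"
    using k2(2) by (simp add: cong_iff_dvd_diff)
  have "[(a ^ k1) ^ k2 = (- (b ^ k1)) ^ k2] (mod int l)"
    using c1 by (rule cong_pow)
  hence e1: "[a ^ (k1 * k2) = b ^ (k1 * k2)] (mod int l)"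
    using k2(3) by (simp add: power_mult)
  have "[(a ^ k2) ^ k1 = (- (b ^ k2)) ^ k1] (mod int l)"
    using c2 by (rule cong_pow)
  hence e2: "[a ^ (k1 * k2) = - (b ^ (k1 * k2))] (mod int l)"
    using k1(3) by (simp add: power_mult[symmetric] mult.commute)
  have "[b ^ (k1 * k2) = - (b ^ (k1 * k2))] (mod int l)"
    using e1 e2 by (meson cong_sym cong_trans)
  hence d: "int l dvd 2 * b ^ (k1 * k2)"
    by (simp add: cong_iff_dvd_diff)
  have cl: "coprime (int l) b"
  proof (rule coprimeI)
    fix g assume g1: "g dvd int l" and g2: "g dvd b"
    have "g dvd b ^ k1" using g2 k1(1) by (simp add: dvd_power_iff_le dvd_trans[OF g2] dvd_power)
    moreover have "g dvd a ^ k1 + b ^ k1" using g1 k1(2) by (rule dvd_trans)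
    ultimately have "g dvd a ^ k1" by (metis dvd_add_left_iff)
    moreover have "coprime (a ^ k1) b" using cop by simp
    ultimately show "is_unit g" using g2 by (meson coprime_common_divisor)
  qed
  hence "coprime (int l) (b ^ (k1 * k2))" by simp
  hence "int l dvd 2" using d by (simp add: coprime_dvd_mult_left_iff)
  hence "l dvd 2" by presburger
  hence "l \<le> 2" by (simp add: dvd_imp_le)
  with l0 show ?thesis by auto
qed

theorem lemma2p12:
  fixes a b :: int and l :: nat
  assumes "coprime a b"
    and "l \<in> G a b"
    and "l \<notin> {1, 2}"
  shows "\<forall>k1 \<in> K a b l. \<forall>k2 \<in> K a b l. even k1 \<longleftrightarrow> even k2"
proof (intro ballI)
  fix k1 k2 assume h1: "k1 \<in> K a b l" and h2: "k2 \<in> K a b l"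
  have l0: "l > 0" using assms(2) by (simp add: G_def)
  show "even k1 \<longleftrightarrow> even k2"
  proof (rule ccontr)
    assume "\<not> (even k1 \<longleftrightarrow> even k2)"
    then consider "odd k1" "even k2" | "odd k2" "even k1" by blast
    then show False
    proof cases
      case 1 then show False using key[OF assms(1) l0, of k1 k2] h1 h2 assms(3) by (simp add: K_def)
    next
      case 2 then show False using key[OF assms(1) l0, of k2 k1] h1 h2 assms(3) by (simp add: K_def)
    qed
  qed
qed

end
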